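(* Let $U$ be a non-empty set and $B\subseteq U^3$ a ternary relation satisfying (BT2): for all $a,b,c\in U$, $B(a,b,c)\Rightarrow B(a,a,b)$. Then $B$ satisfies (BT3): for all $a,b,c\in U$, $B(a,b,c)\wedge B(a,c,b)\Rightarrow b=c$, if and only if $B$ satisfies both (BTW): for all $a,b\in U$, $B(a,b,a)\Rightarrow a=b$, and (C): for all $a,b,c\in U$, if $a,b,c$ are pairwise distinct then $\langle a,b,c\rangle\notin B$ or $\langle a,c,b\rangle\notin B$. *)

theory Defs
  imports Main
begin

end

theory Submission
  imports Defs
begin

theorem proposition9:
  fixes U :: "'a set" and B :: "('a \<times> 'a \<times> 'a) set"
  assumes "U \<noteq> {}"
    and "B \<subseteq> U \<times> U \<times> U"
    and BT2: "\<forall>a\<in>U. \<forall>b\<in>U. \<forall>c\<in>U. (a, b, c) \<in> B \<longrightarrow> (a, a, b) \<in> B"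
  shows "(\<forall>a\<in>U. \<forall>b\<in>U. \<forall>c\<in>U. (a, b, c) \<in> B \<and> (a, c, b) \<in> B \<longrightarrow> b = c)
     \<longleftrightarrow>
     ((\<forall>a\<in>U. \<forall>b\<in>U. (a, b, a) \<in> B \<longrightarrow> a = b) \<and>
      (\<forall>a\<in>U. \<forall>b\<in>U. \<forall>c\<in>U. a \<noteq> b \<and> a \<noteq> c \<and> b \<noteq> c \<longrightarrow> (a, b, c) \<notin> B \<or> (a, c, b) \<notin> B))"
proof
  assume H: "\<forall>a\<in>U. \<forall>b\<in>U. \<forall>c\<in>U. (a, b, c) \<in> B \<and> (a, c, b) \<in> B \<longrightarrow> b = c"
  show "(\<forall>a\<in>U. \<forall>b\<in>U. (a, b, a) \<in> B \<longrightarrow> a = b) \<and>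
      (\<forall>a\<in>U. \<forall>b\<in>U. \<forall>c\<in>U. a \<noteq> b \<and> a \<noteq> c \<and> b \<noteq> c \<longrightarrow> (a, b, c) \<notin> B \<or> (a, c, b) \<notin> B)"
    using H BT2 by metis
next
  assume H: "(\<forall>a\<in>U. \<forall>b\<in>U. (a, b, a) \<in> B \<longrightarrow> a = b) \<and>
      (\<forall>a\<in>U. \<forall>b\<in>U. \<forall>c\<in>U. a \<noteq> b \<and> a \<noteq> c \<and> b \<noteq> c \<longrightarrow> (a, b, c) \<notin> B \<or> (a, c, b) \<notin> B)"
  show "\<forall>a\<in>U. \<forall>b\<in>U. \<forall>c\<in>U. (a, b, c) \<in> B \<and> (a, c, b) \<in> B \<longrightarrow> b = c"
    using H by metis
qed

end
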